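(* For a unital commutative semiring $X$, the following are equivalent: (1) $X$ is fully elementary, upper-bound and $2$-cancellative; (2) $X$ is Frobenius and idempotent.
   Context: A semiring $(X,+,0,\cdot)$: $(X,+,0)$ commutative monoid, $(X,\cdot)$ semigroup, distributivity, $0$ absorbing. Unital: has a multiplicative unit $1$; commutative: $\cdot$ commutative; idempotent: $x+x=x$ for all $x$. Intrinsic order: $a\le b$ iff $a+x=b$ for some $x\in X$; $X$ is upper-bound if this preorder is antisymmetric. $X$ is $2$-cancellative if $x+x=y+y$ implies $x=y$. $X$ is Frobenius if $(x+y)^n=x^n+y^n$ for all $x,y\in X$ and all integers $n\ge1$. Polynomials in $n$ variables are functions $X^n\to X$ represented by formal expressions $\sum_{k=1}^m a_k\prod_{j=1}^n x_j^{d_{k,j}}$ ($a_k\in X$). A polynomial is symmetric if represented by an expression which, with each monomial $a_k\prod_j x_j^{d_{k,j}}$, contains all monomials $a_k\prod_j x_{\sigma(j)}^{d_{k,j}}$, $\sigma\in S_n$ (up to reordering factors). $e_j$ ($1\le j\le n$) is the sum of all products of $j$ distinct variables among $x_1,\dots,x_n$. $X$ is $n$-elementary if every symmetric polynomial $p$ in $n$ variables can be written as $p(x_1,\dots,x_n)=r(e_1,\dots,e_n)$ for some polynomial $r$, for all $x_i\in X$; $X$ is fully elementary if it is $n$-elementary for every $n\in\mathbb{N}$. *)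

theory Defs
  imports "HOL-Combinatorics.Permutations" "HOL-Library.Multiset"
begin

text \<open>Unital commutative semirings (possibly trivial, i.e. 0 = 1 allowed) are the
  type class combination {comm_semiring_0, comm_monoid_mult}.\<close>

text \<open>A formal polynomial expression in n variables x_0..x_(n-1) is a list of monomials
  (a, d): coefficient a and exponent vector d (only d j for j < n is relevant).\<close>

type_synonym 'a poly_expr = "('a \<times> (nat \<Rightarrow> nat)) list"

definition poly_eval :: "nat \<Rightarrow> ('a::{comm_semiring_0, comm_monoid_mult}) poly_expr \<Rightarrow> (nat \<Rightarrow> 'a) \<Rightarrow> 'a" where
  "poly_eval n ps x = (\<Sum>(a, d) \<leftarrow> ps. a * (\<Prod>j<n. x j ^ d j))"

definition symmetric_expr :: "nat \<Rightarrow> 'a poly_expr \<Rightarrow> bool" where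
  "symmetric_expr n ps \<longleftrightarrow>
     (\<forall>\<sigma>. \<sigma> permutes {..<n} \<longrightarrow> mset (map (\<lambda>(a, d). (a, d \<circ> \<sigma>)) ps) = mset ps)"

definition elem_sym :: "nat \<Rightarrow> nat \<Rightarrow> (nat \<Rightarrow> 'a::{comm_semiring_0, comm_monoid_mult}) \<Rightarrow> 'a" where
  "elem_sym n k x = (\<Sum>S\<in>{S. S \<subseteq> {..<n} \<and> card S = k}. \<Prod>i\<in>S. x i)"

definition n_elementary :: "'a::{comm_semiring_0, comm_monoid_mult} itself \<Rightarrow> nat \<Rightarrow> bool" where
  "n_elementary _ n \<longleftrightarrow>
     (\<forall>ps :: 'a poly_expr. symmetric_expr n ps \<longrightarrow>
        (\<exists>rs :: 'a poly_expr. \<forall>x :: nat \<Rightarrow> 'a.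
            poly_eval n ps x = poly_eval n rs (\<lambda>j. elem_sym n (Suc j) x)))"

definition fully_elementary :: "'a::{comm_semiring_0, comm_monoid_mult} itself \<Rightarrow> bool" where
  "fully_elementary T \<longleftrightarrow> (\<forall>n. n_elementary T n)"

definition intr_le :: "'a::comm_monoid_add \<Rightarrow> 'a \<Rightarrow> bool" where
  "intr_le a b \<longleftrightarrow> (\<exists>x. a + x = b)"

definition sr_upper_bound :: "'a::comm_monoid_add itself \<Rightarrow> bool" where
  "sr_upper_bound _ \<longleftrightarrow> (\<forall>a b :: 'a. intr_le a b \<and> intr_le b a \<longrightarrow> a = b)"

definition sr_two_cancellative :: "'a::comm_monoid_add itself \<Rightarrow> bool" where
  "sr_two_cancellative _ \<longleftrightarrow> (\<forall>x y :: 'a. x + x = y + y \<longrightarrow> x = y)"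

definition sr_frobenius :: "'a::{comm_semiring_0, comm_monoid_mult} itself \<Rightarrow> bool" where
  "sr_frobenius _ \<longleftrightarrow> (\<forall>(x::'a) y (n::nat). n \<ge> 1 \<longrightarrow> (x + y) ^ n = x ^ n + y ^ n)"

definition sr_idempotent :: "'a::comm_monoid_add itself \<Rightarrow> bool" where
  "sr_idempotent _ \<longleftrightarrow> (\<forall>x :: 'a. x + x = x)"

end

theory Submission
  imports Defs
begin


definition ile :: "'a::comm_monoid_add \<Rightarrow> 'a \<Rightarrow> bool" where
  "ile a b \<longleftrightarrow> a + b = b"

lemma idemD: "sr_idempotent TYPE('a::comm_monoid_add) \<Longrightarrow> (x::'a) + x = x"
  by (simp add: sr_idempotent_def)

lemma frobD: "sr_frobenius TYPE('a::{comm_semiring_0,comm_monoid_mult}) \<Longrightarrow> n \<ge> 1 \<Longrightarrow> ((x::'a) + y)^n = x^n + y^n"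
  by (simp add: sr_frobenius_def)

lemma ile_trans: "ile a b \<Longrightarrow> ile b c \<Longrightarrow> ile a c"
  unfolding ile_def by (metis add.assoc)

lemma ile_antisym: "ile a b \<Longrightarrow> ile b a \<Longrightarrow> a = b"
  unfolding ile_def by (metis add.commute)

lemma ile_add: "ile a c \<Longrightarrow> ile b c \<Longrightarrow> ile (a + b) c"
  unfolding ile_def by (metis add.assoc)

lemma ile_addI1: assumes "sr_idempotent TYPE('a::comm_monoid_add)" shows "ile (a::'a) (a + b)"
  using idemD[OF assms, of a] unfolding ile_def by (metis add.assoc)

lemma ile_addI2: assumes "sr_idempotent TYPE('a::comm_monoid_add)" shows "ile (b::'a) (a + b)"
  using ile_addI1[OF assms, of b a] by (simp add: add.commute)

lemma ile_mult: "ile a b \<Longrightarrow> ile ((w::'a::comm_semiring_0) * a) (w * b)"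
  unfolding ile_def by (metis distrib_left)

lemma ile_sum: assumes "finite I" "\<forall>i\<in>I. ile (f i) b" shows "ile (sum f I) b"
  using assms by (induction I rule: finite_induct) (auto simp: ile_def intro: ile_add[unfolded ile_def])

lemma ile_mem_sum: assumes "sr_idempotent TYPE('a::comm_monoid_add)" "finite I" "i \<in> I"
  shows "ile (f i :: 'a) (sum f I)"
proof -
  have "sum f I = f i + sum f (I - {i})" using assms by (simp add: sum.remove)
  then show ?thesis using ile_addI1[OF assms(1)] by simp
qed

lemma sum_idem_const: assumes "sr_idempotent TYPE('a::comm_monoid_add)" "finite I" "I \<noteq> {}"
  "\<forall>i\<in>I. f i = (a::'a)" shows "sum f I = a"
  using assms(2,3,4)
proof (induction I rule: finite_ne_induct)
  case (singleton x) then show ?case by simp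
next
  case (insert x F) then show ?case using idemD[OF assms(1)] by simp
qed

lemma absorb:
  assumes idem: "sr_idempotent TYPE('a::{comm_semiring_0,comm_monoid_mult})"
  shows "ile ((x::'a)^c * y^m) ((x+y)^(c+m))"
proof (induction c)
  case 0
  show ?case
  proof (induction m)
    case 0 then show ?case using idemD[OF idem] by (simp add: ile_def)
  next
    case (Suc m)
    have "ile (y * y^m) (y * (x+y)^m)" using Suc ile_mult by simp
    moreover have "ile (y * (x+y)^m) ((x+y)^Suc m)"
      using ile_addI2[OF idem, of "y*(x+y)^m" "x*(x+y)^m"] by (simp add: distrib_right)
    ultimately show ?case by (simp add: ile_trans)
  qed
next
  case (Suc c)
  have "ile (x * (x^c*y^m)) (x * (x+y)^(c+m))" using Suc ile_mult by blast
  moreover have "ile (x * (x+y)^(c+m)) ((x+y)^Suc (c+m))"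
    using ile_addI1[OF idem, of "x*(x+y)^(c+m)" "y*(x+y)^(c+m)"] by (simp add: distrib_right)
  ultimately show ?case by (simp add: ile_trans mult.assoc)
qed

lemma sum_pow:
  assumes frob: "sr_frobenius TYPE('a::{comm_semiring_0,comm_monoid_mult})"
    and "c \<ge> 1" "finite I"
  shows "(sum u I :: 'a)^c = (\<Sum>i\<in>I. (u i)^c)"
  using assms(3)
proof (induction I rule: finite_induct)
  case empty then show ?case using assms(2) by (cases c) auto
next
  case (insert x F) then show ?case using frobD[OF frob assms(2)] by simp
qed

lemma key_ineq:
  assumes idem: "sr_idempotent TYPE('a::{comm_semiring_0,comm_monoid_mult})"
    and frob: "sr_frobenius TYPE('a)"
    and "\<alpha> \<le> \<beta>"
  shows "ile ((x::'a)^(c+\<alpha>) * y^\<beta>) (x^\<alpha> * y^(c+\<beta>) + x^(c+\<beta>) * y^\<alpha>)"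
proof -
  obtain m where bm: "\<beta> = \<alpha> + m" using assms(3) le_Suc_ex by blast
  have h: "ile (x^c * y^m) (y^(c+m) + x^(c+m))"
  proof (cases "c + m = 0")
    case True then show ?thesis using idemD[OF idem] by (simp add: ile_def)
  next
    case False
    then have "c+m \<ge> 1" by linarith
    then have "(x+y)^(c+m) = y^(c+m) + x^(c+m)" using frobD[OF frob, of "c+m" y x] by (metis add.commute)
    then show ?thesis using absorb[OF idem, of x c y m] by simp
  qed
  have "ile ((x^\<alpha> * y^\<alpha>) * (x^c * y^m)) ((x^\<alpha> * y^\<alpha>) * (y^(c+m) + x^(c+m)))"
    using ile_mult[OF h] by blast
  then show ?thesis unfolding bm by (simp add: power_add algebra_simps)
qed



definition mon :: "nat \<Rightarrow> (nat \<Rightarrow> nat) \<Rightarrow> (nat \<Rightarrow> 'a::comm_monoid_mult) \<Rightarrow> 'a" where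
  "mon n e x = (\<Prod>j<n. x j ^ e j)"

definition Msym :: "nat \<Rightarrow> (nat \<Rightarrow> nat) \<Rightarrow> (nat \<Rightarrow> 'a::{comm_semiring_0,comm_monoid_mult}) \<Rightarrow> 'a" where
  "Msym n d x = (\<Sum>\<sigma>\<in>{\<sigma>. \<sigma> permutes {..<n}}. mon n (d \<circ> \<sigma>) x)"

definition tm :: "nat \<Rightarrow> nat \<Rightarrow> (nat \<Rightarrow> nat) \<Rightarrow> nat set \<Rightarrow> (nat \<Rightarrow> nat) \<Rightarrow> (nat \<Rightarrow> 'a::comm_monoid_mult) \<Rightarrow> 'a" where
  "tm n c \<mu> S \<sigma> x = mon n (\<lambda>j. (if j \<in> S then c else 0) + \<mu> (\<sigma> j)) x"

lemma mon_split2: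
  assumes "j1 < n" "j2 < n" "j1 \<noteq> j2"
  shows "mon n e x = x j1 ^ e j1 * x j2 ^ e j2 * (\<Prod>j\<in>{..<n} - {j1} - {j2}. x j ^ e j)"
proof -
  have "mon n e x = x j1 ^ e j1 * (\<Prod>j\<in>{..<n} - {j1}. x j ^ e j)"
    unfolding mon_def using assms by (simp add: prod.remove)
  also have "(\<Prod>j\<in>{..<n} - {j1}. x j ^ e j) = x j2 ^ e j2 * (\<Prod>j\<in>{..<n} - {j1} - {j2}. x j ^ e j)"
    using assms by (subst prod.remove[of _ j2]) auto
  finally show ?thesis by (simp add: mult.assoc)
qed

lemma KL:
  assumes idem: "sr_idempotent TYPE('a::{comm_semiring_0,comm_monoid_mult})"
    and frob: "sr_frobenius TYPE('a)"
    and Tn: "T \<subseteq> {..<n}" and hT: "\<forall>i\<in>T. \<forall>i'\<in>{..<n}-T. \<mu> i' \<le> \<mu> i"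
  shows "S \<subseteq> {..<n} \<Longrightarrow> card S = card T \<Longrightarrow> \<sigma> permutes {..<n} \<Longrightarrow> card (\<sigma>`S - T) = m \<Longrightarrow>
     ile (tm n c \<mu> S \<sigma> (x::nat \<Rightarrow> 'a)) (Msym n (\<lambda>i. (if i\<in>T then c else 0) + \<mu> i) x)"
proof (induction m arbitrary: S \<sigma> rule: less_induct)
  case (less m S \<sigma>)
  define \<nu> where "\<nu> = (\<lambda>i. (if i\<in>T then c else 0) + \<mu> i)"
  have finT: "finite T" using Tn finite_subset by blast
  have finS: "finite S" using less.prems(1) finite_subset by blast
  have perm: "\<sigma> permutes {..<n}" by fact
  have inj: "inj \<sigma>" using permutes_inj[OF perm] .
  have inn: "\<And>y. \<sigma> y < n \<longleftrightarrow> y < n" using permutes_in_image[OF perm] by simp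
  have cardS: "card (\<sigma>`S) = card T" using less.prems(2) card_image inj inj_on_subset by (metis subset_UNIV)
  have finP: "finite {\<sigma>. \<sigma> permutes {..<n}}" by (simp add: finite_permutations)
  show ?case
  proof (cases "\<sigma>`S - T = {}")
    case True
    then have "\<sigma>`S \<subseteq> T" by blast
    then have eq: "\<sigma>`S = T" using card_subset_eq[OF finT] cardS by blast
    have "tm n c \<mu> S \<sigma> x = mon n (\<nu> \<circ> \<sigma>) x"
      unfolding tm_def mon_def \<nu>_def
      by (rule prod.cong) (auto simp: eq[symmetric] inj_image_mem_iff[OF inj])
    then show ?thesis using ile_mem_sum[OF idem finP, of \<sigma> "\<lambda>\<sigma>. mon n (\<nu> \<circ> \<sigma>) x"] perm
      unfolding Msym_def \<nu>_def by simp
  next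
    case False
    then obtain a where a: "a \<in> \<sigma>`S" "a \<notin> T" by blast
    have "T - \<sigma>`S \<noteq> {}"
    proof
      assume "T - \<sigma>`S = {}"
      then have "T \<subseteq> \<sigma>`S" by blast
      then have "T = \<sigma>`S" using card_subset_eq[of "\<sigma>`S" T] finS cardS by simp
      then show False using a by blast
    qed
    then obtain b where b: "b \<in> T" "b \<notin> \<sigma>`S" by blast
    obtain j1 where j1: "j1 \<in> S" "\<sigma> j1 = a" using a by blast
    define j2 where "j2 = inv \<sigma> b"
    have sj2: "\<sigma> j2 = b" unfolding j2_def using permutes_inverses[OF perm] by simp
    have bn: "b < n" using b Tn by blast
    have j2n: "j2 < n" using inn sj2 bn by metis
    have j1n: "j1 < n" using j1 less.prems(1) by blast
    have an: "a < n" using j1 j1n inn by metis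
    have j2S: "j2 \<notin> S" using sj2 b by blast
    have j12: "j1 \<noteq> j2" using j1 j2S by blast
    have ab: "a \<noteq> b" using a b by blast
    have muab: "\<mu> a \<le> \<mu> b" using hT b a an by blast
    define S1 where "S1 = insert j2 (S - {j1})"
    define \<sigma>2 where "\<sigma>2 = transpose a b \<circ> \<sigma>"
    have S1n: "S1 \<subseteq> {..<n}" using S1_def less.prems(1) j2n by blast
    have cpos: "card S > 0" using finS j1 by (auto simp: card_gt_0_iff)
    have cS1: "card S1 = card T" unfolding S1_def using finS j1 j2S less.prems(2) cpos
      by (simp add: card_insert_disjoint card_Diff_singleton)
    have perm2: "\<sigma>2 permutes {..<n}" unfolding \<sigma>2_def
      by (rule permutes_compose[OF perm permutes_swap_id]) (use an bn in auto)
    have D1: "\<sigma>`S1 - T = (\<sigma>`S - T) - {a}"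
    proof -
      have "\<sigma>`S1 = insert b (\<sigma>`S - {a})"
      proof -
        have "\<sigma>`(S - {j1}) = \<sigma>`S - \<sigma>`{j1}" by (rule image_set_diff[OF inj])
        then have "\<sigma>`(S - {j1}) = \<sigma>`S - {a}" using j1 by simp
        then show ?thesis unfolding S1_def using sj2 by (simp only: image_insert)
      qed
      then show ?thesis using b by auto
    qed
    have D2: "\<sigma>2`S - T = (\<sigma>`S - T) - {a}"
    proof -
      have "\<sigma>2`S = transpose a b ` (\<sigma>`S)" unfolding \<sigma>2_def by (simp add: image_comp)
      also have "\<dots> = insert b (\<sigma>`S - {a})"
      proof
        show "transpose a b ` \<sigma> ` S \<subseteq> insert b (\<sigma> ` S - {a})"
          using a b by (auto simp: transpose_def)
        show "insert b (\<sigma> ` S - {a}) \<subseteq> transpose a b ` \<sigma> ` S"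
        proof
          fix y assume "y \<in> insert b (\<sigma> ` S - {a})"
          then show "y \<in> transpose a b ` \<sigma> ` S"
          proof
            assume "y = b" then show ?thesis using a by (metis image_eqI transpose_apply_first)
          next
            assume y: "y \<in> \<sigma> ` S - {a}"
            then have "y \<noteq> b" using b by blast
            then have "transpose a b y = y" using y by auto
            then show ?thesis using y by (metis DiffD1 image_eqI)
          qed
        qed
      qed
      finally show ?thesis using b by auto
    qed
    have lt: "card ((\<sigma>`S - T) - {a}) < m"
      using card_Diff1_less[of "\<sigma>`S - T" a] a finS less.prems(4) by simp
    have I1: "ile (tm n c \<mu> S1 \<sigma> x) (Msym n \<nu> x)"
      using less.IH[OF lt S1n cS1 perm] D1 unfolding \<nu>_def by simp
    have I2: "ile (tm n c \<mu> S \<sigma>2 x) (Msym n \<nu> x)"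
      using less.IH[OF lt less.prems(1) less.prems(2) perm2] D2 unfolding \<nu>_def by simp
    define e0 where "e0 = (\<lambda>j. (if j \<in> S then c else 0) + \<mu> (\<sigma> j))"
    define R where "R = (\<Prod>j\<in>{..<n} - {j1} - {j2}. x j ^ e0 j)"
    have t0: "tm n c \<mu> S \<sigma> x = x j1 ^ (c + \<mu> a) * x j2 ^ \<mu> b * R"
      unfolding tm_def R_def e0_def by (subst mon_split2[OF j1n j2n j12]) (simp add: j1 j2S sj2)
    have t1: "tm n c \<mu> S1 \<sigma> x = x j1 ^ \<mu> a * x j2 ^ (c + \<mu> b) * R"
    proof -
      have "tm n c \<mu> S1 \<sigma> x = x j1 ^ \<mu> a * x j2 ^ (c + \<mu> b) *
          (\<Prod>j\<in>{..<n} - {j1} - {j2}. x j ^ ((if j \<in> S1 then c else 0) + \<mu> (\<sigma> j)))"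
        unfolding tm_def by (subst mon_split2[OF j1n j2n j12]) (simp add: S1_def j1 j12 sj2)
      also have "(\<Prod>j\<in>{..<n} - {j1} - {j2}. x j ^ ((if j \<in> S1 then c else 0) + \<mu> (\<sigma> j))) = R"
        unfolding R_def e0_def by (rule prod.cong) (auto simp: S1_def)
      finally show ?thesis .
    qed
    have t2: "tm n c \<mu> S \<sigma>2 x = x j1 ^ (c + \<mu> b) * x j2 ^ \<mu> a * R"
    proof -
      have "tm n c \<mu> S \<sigma>2 x = x j1 ^ (c + \<mu> b) * x j2 ^ \<mu> a *
          (\<Prod>j\<in>{..<n} - {j1} - {j2}. x j ^ ((if j \<in> S then c else 0) + \<mu> (\<sigma>2 j)))"
        unfolding tm_def by (subst mon_split2[OF j1n j2n j12]) (simp add: \<sigma>2_def j1 j2S sj2)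
      also have "(\<Prod>j\<in>{..<n} - {j1} - {j2}. x j ^ ((if j \<in> S then c else 0) + \<mu> (\<sigma>2 j))) = R"
        unfolding R_def e0_def
      proof (rule prod.cong)
        fix j assume j: "j \<in> {..<n} - {j1} - {j2}"
        then have "\<sigma> j \<noteq> a" "\<sigma> j \<noteq> b" using inj j1 sj2 by (auto simp: inj_eq)
        then show "x j ^ ((if j \<in> S then c else 0) + \<mu> (\<sigma>2 j)) = x j ^ ((if j \<in> S then c else 0) + \<mu> (\<sigma> j))"
          by (simp add: \<sigma>2_def)
      qed simp
      finally show ?thesis .
    qed
    have K: "ile (x j1 ^ (c + \<mu> a) * x j2 ^ \<mu> b) (x j1 ^ \<mu> a * x j2 ^ (c + \<mu> b) + x j1 ^ (c + \<mu> b) * x j2 ^ \<mu> a)"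
      using key_ineq[OF idem frob muab] .
    have e1: "R * (x j1 ^ (c + \<mu> a) * x j2 ^ \<mu> b) = tm n c \<mu> S \<sigma> x"
      unfolding t0 by (simp only: mult_ac)
    have e2: "R * (x j1 ^ \<mu> a * x j2 ^ (c + \<mu> b) + x j1 ^ (c + \<mu> b) * x j2 ^ \<mu> a)
        = tm n c \<mu> S1 \<sigma> x + tm n c \<mu> S \<sigma>2 x"
      unfolding t1 t2 distrib_left by (simp only: mult_ac)
    have "ile (tm n c \<mu> S \<sigma> x) (tm n c \<mu> S1 \<sigma> x + tm n c \<mu> S \<sigma>2 x)"
      using ile_mult[OF K, of R] unfolding e1 e2 .
    moreover have "ile (tm n c \<mu> S1 \<sigma> x + tm n c \<mu> S \<sigma>2 x) (Msym n \<nu> x)"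
      using I1 I2 ile_add by blast
    ultimately show ?thesis unfolding \<nu>_def using ile_trans by blast
  qed
qed



lemma finite_ksets: "finite {S. S \<subseteq> {..<(n::nat)} \<and> card S = k}"
  by (rule finite_subset[of _ "Pow {..<n}"]) auto

lemma prod_pow_distrib': "prod f A ^ n = prod (\<lambda>x. (f x) ^ n) A"
  for f :: "'b \<Rightarrow> 'a::comm_monoid_mult"
  by (induct A rule: infinite_finite_induct) (auto simp add: power_mult_distrib)

lemma elem_sym_pow:
  assumes frob: "sr_frobenius TYPE('a::{comm_semiring_0,comm_monoid_mult})" and c: "c \<ge> 1"
  shows "elem_sym n k (x::nat\<Rightarrow>'a) ^ c = (\<Sum>S\<in>{S. S \<subseteq> {..<n} \<and> card S = k}. \<Prod>i\<in>S. x i ^ c)"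
  unfolding elem_sym_def sum_pow[OF frob c finite_ksets] by (rule sum.cong[OF refl]) (rule prod_pow_distrib')

lemma prod_mon_tm:
  assumes "S \<subseteq> {..<n}"
  shows "(\<Prod>i\<in>S. x i ^ c) * mon n (d \<circ> \<sigma>) x = tm n c d S \<sigma> (x::nat \<Rightarrow> 'a::comm_monoid_mult)"
proof -
  have "(\<Prod>j<n. x j ^ (if j \<in> S then c else 0)) = (\<Prod>j<n. if j \<in> S then x j ^ c else 1)"
    by (rule prod.cong) auto
  also have "\<dots> = (\<Prod>j\<in>{..<n} \<inter> S. x j ^ c)" by (simp add: prod.inter_restrict)
  also have "{..<n} \<inter> S = S" using assms by blast
  finally have h: "(\<Prod>j<n. x j ^ (if j \<in> S then c else 0)) = (\<Prod>i\<in>S. x i ^ c)" .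
  show ?thesis unfolding tm_def mon_def h[symmetric]
    by (simp add: power_add prod.distrib)
qed

lemma inv_image_mem:
  assumes "\<rho> permutes A" shows "j \<in> inv \<rho> ` S \<longleftrightarrow> \<rho> j \<in> S"
proof
  assume "j \<in> inv \<rho> ` S"
  then obtain s where "s \<in> S" "j = inv \<rho> s" by blast
  then show "\<rho> j \<in> S" using permutes_inverses[OF assms] by simp
next
  assume "\<rho> j \<in> S"
  moreover have "j = inv \<rho> (\<rho> j)" using permutes_inverses[OF assms] by simp
  ultimately show "j \<in> inv \<rho> ` S" by blast
qed

lemma Msym_step:
  assumes idem: "sr_idempotent TYPE('a::{comm_semiring_0,comm_monoid_mult})"
    and frob: "sr_frobenius TYPE('a)"
    and Sdef: "S = {j. j < n \<and> 0 < d j}" and Sne: "S \<noteq> {}"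
    and cdef: "c = Min (d ` S)"
    and d'def: "d' = (\<lambda>j. if j \<in> S then d j - c else d j)"
  shows "Msym n d (x::nat \<Rightarrow> 'a) = elem_sym n (card S) x ^ c * Msym n d' x"
proof -
  have finS: "finite S" unfolding Sdef by simp
  have Sn: "S \<subseteq> {..<n}" unfolding Sdef by auto
  have cin: "c \<in> d ` S" unfolding cdef using finS Sne by simp
  then have c1: "c \<ge> 1" unfolding Sdef by auto
  have cle: "\<And>j. j \<in> S \<Longrightarrow> c \<le> d j" unfolding cdef using finS by simp
  have nu: "(\<lambda>i. (if i \<in> S then c else 0) + d' i) = d"
    using cle unfolding d'def by fastforce
  define Sets where "Sets = {S'. S' \<subseteq> {..<n} \<and> card S' = card S}"
  define P where "P = {\<sigma>. \<sigma> permutes {..<n}}"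
  have finSets: "finite Sets" unfolding Sets_def by (rule finite_ksets)
  have finP: "finite P" unfolding P_def by (simp add: finite_permutations)
  have hT: "\<forall>i\<in>S. \<forall>i'\<in>{..<n}-S. d' i' \<le> d' i"
    unfolding d'def Sdef by auto
  have RHS: "elem_sym n (card S) x ^ c * Msym n d' x = (\<Sum>S'\<in>Sets. \<Sum>\<sigma>\<in>P. tm n c d' S' \<sigma> x)"
    unfolding elem_sym_pow[OF frob c1] Msym_def sum_product Sets_def[symmetric] P_def[symmetric]
    by (rule sum.cong[OF refl], rule sum.cong[OF refl]) (simp add: prod_mon_tm Sets_def)
  have A: "ile (\<Sum>S'\<in>Sets. \<Sum>\<sigma>\<in>P. tm n c d' S' \<sigma> x) (Msym n d x)"
  proof (rule ile_sum[OF finSets], rule ballI, rule ile_sum[OF finP], rule ballI)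
    fix S' \<sigma> assume "S' \<in> Sets" "\<sigma> \<in> P"
    then show "ile (tm n c d' S' \<sigma> x) (Msym n d x)"
      using KL[OF idem frob Sn hT, of S' \<sigma> "card (\<sigma>`S' - S)" c x] unfolding nu Sets_def P_def by simp
  qed
  have B: "ile (Msym n d x) (\<Sum>S'\<in>Sets. \<Sum>\<sigma>\<in>P. tm n c d' S' \<sigma> x)"
    unfolding Msym_def P_def[symmetric]
  proof (rule ile_sum[OF finP], rule ballI)
    fix \<rho> assume rP: "\<rho> \<in> P"
    then have rp: "\<rho> permutes {..<n}" unfolding P_def by simp
    have ip: "inv \<rho> permutes {..<n}" using permutes_inv[OF rp] .
    have mem: "inv \<rho> ` S \<in> Sets" unfolding Sets_def
    proof (intro CollectI conjI)
      show "inv \<rho> ` S \<subseteq> {..<n}" using Sn permutes_in_image[OF ip] by auto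
      show "card (inv \<rho> ` S) = card S" using permutes_inj[OF ip] by (simp add: card_image inj_on_subset)
    qed
    have eq: "mon n (d \<circ> \<rho>) x = tm n c d' (inv \<rho> ` S) \<rho> x"
      unfolding tm_def nu[symmetric] by (simp add: inv_image_mem[OF rp] comp_def)
    have "ile (tm n c d' (inv \<rho> ` S) \<rho> x) (\<Sum>\<sigma>\<in>P. tm n c d' (inv \<rho> ` S) \<sigma> x)"
      by (rule ile_mem_sum[OF idem finP rP])
    moreover have "ile (\<Sum>\<sigma>\<in>P. tm n c d' (inv \<rho> ` S) \<sigma> x) (\<Sum>S'\<in>Sets. \<Sum>\<sigma>\<in>P. tm n c d' S' \<sigma> x)"
      by (rule ile_mem_sum[OF idem finSets mem])
    ultimately show "ile (mon n (d \<circ> \<rho>) x) (\<Sum>S'\<in>Sets. \<Sum>\<sigma>\<in>P. tm n c d' S' \<sigma> x)"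
      unfolding eq using ile_trans by blast
  qed
  show ?thesis using ile_antisym[OF B A] RHS by simp
qed



definition rep :: "nat \<Rightarrow> ((nat \<Rightarrow> 'a::{comm_semiring_0,comm_monoid_mult}) \<Rightarrow> 'a) \<Rightarrow> bool" where
  "rep n f \<longleftrightarrow> (\<exists>rs. \<forall>x. f x = poly_eval n rs (\<lambda>j. elem_sym n (Suc j) x))"

lemma poly_eval_Nil: "poly_eval n [] y = 0"
  by (simp add: poly_eval_def)

lemma poly_eval_Cons: "poly_eval n ((a,d)#ps) y = a * mon n d y + poly_eval n ps y"
  by (simp add: poly_eval_def mon_def)

lemma poly_eval_append: "poly_eval n (ps @ qs) y = poly_eval n ps y + poly_eval n qs y"
  by (simp add: poly_eval_def)

lemma poly_eval_mon: "poly_eval n ps y = (\<Sum>(a, d) \<leftarrow> ps. a * mon n d y)"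
  by (simp add: poly_eval_def mon_def)

lemma rep_cong: "rep n f \<Longrightarrow> (\<And>x. f x = g x) \<Longrightarrow> rep n g"
  unfolding rep_def by simp

lemma rep_zero: "rep n (\<lambda>x. 0)"
  unfolding rep_def by (rule exI[of _ "[]"]) (simp add: poly_eval_Nil)

lemma rep_one: "rep n (\<lambda>x. 1)"
  unfolding rep_def by (rule exI[of _ "[(1, \<lambda>_. 0)]"]) (simp add: poly_eval_Cons poly_eval_Nil mon_def)

lemma rep_add: assumes "rep n f" "rep n g" shows "rep n (\<lambda>x. f x + g x)"
proof -
  obtain rs where rs: "\<forall>x. f x = poly_eval n rs (\<lambda>j. elem_sym n (Suc j) x)" using assms rep_def by blast
  obtain qs where qs: "\<forall>x. g x = poly_eval n qs (\<lambda>j. elem_sym n (Suc j) x)" using assms rep_def by blast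
  show ?thesis unfolding rep_def
    by (intro exI[of _ "rs @ qs"] allI) (simp add: rs qs poly_eval_append)
qed

lemma rep_cmult: assumes "rep n f" shows "rep n (\<lambda>x. a * f x)"
proof -
  obtain rs where rs: "\<forall>x. f x = poly_eval n rs (\<lambda>j. elem_sym n (Suc j) x)" using assms rep_def by blast
  have "\<And>y. poly_eval n (map (\<lambda>(b,d). (a*b, d)) rs) y = a * poly_eval n rs y"
  proof -
    fix y show "poly_eval n (map (\<lambda>(b,d). (a*b, d)) rs) y = a * poly_eval n rs y"
      by (induction rs) (auto simp: poly_eval_Cons poly_eval_Nil distrib_left mult.assoc)
  qed
  then show ?thesis unfolding rep_def
    by (intro exI[of _ "map (\<lambda>(b,d). (a*b, d)) rs"] allI) (simp add: rs)
qed

lemma prod_delta_pow: "k' < (n::nat) \<Longrightarrow> (\<Prod>j<n. (y j::'a::comm_monoid_mult) ^ (if j = k' then c else 0)) = y k' ^ c"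
proof -
  assume k: "k' < n"
  have "(\<Prod>j<n. y j ^ (if j = k' then c else 0)) = (\<Prod>j<n. if j = k' then y j ^ c else 1)"
    by (rule prod.cong) auto
  also have "\<dots> = y k' ^ c * (\<Prod>j\<in>{..<n} - {k'}. if j = k' then y j ^ c else 1)"
    using k by (subst prod.remove[of _ k']) auto
  also have "(\<Prod>j\<in>{..<n} - {k'}. if j = k' then y j ^ c else 1) = 1"
    by (rule prod.neutral) auto
  finally show ?thesis by simp
qed

lemma rep_esym_mult:
  assumes "rep n f" "1 \<le> k" "k \<le> n"
  shows "rep n (\<lambda>x. elem_sym n k x ^ c * f x)"
proof -
  obtain rs where rs: "\<forall>x. f x = poly_eval n rs (\<lambda>j. elem_sym n (Suc j) x)" using assms rep_def by blast
  define \<delta> where "\<delta> = (\<lambda>j::nat. if j = k - 1 then c else 0)"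
  have kn: "k - 1 < n" using assms by simp
  have m: "\<And>e y. mon n (\<lambda>j. e j + \<delta> j) y = mon n e y * y (k - 1) ^ c"
    unfolding mon_def \<delta>_def power_add prod.distrib prod_delta_pow[OF kn] by (rule refl)
  have "\<And>y. poly_eval n (map (\<lambda>(b,e). (b, \<lambda>j. e j + \<delta> j)) rs) y = y (k - 1) ^ c * poly_eval n rs y"
  proof -
    fix y show "poly_eval n (map (\<lambda>(b,e). (b, \<lambda>j. e j + \<delta> j)) rs) y = y (k - 1) ^ c * poly_eval n rs y"
      by (induction rs) (auto simp: poly_eval_Cons poly_eval_Nil distrib_left m mult_ac)
  qed
  note pe = this
  have kk: "Suc (k - 1) = k" using assms by simp
  show ?thesis unfolding rep_def
  proof (rule exI[of _ "map (\<lambda>(b,e). (b, \<lambda>j. e j + \<delta> j)) rs"], rule allI)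
    fix x
    show "elem_sym n k x ^ c * f x = poly_eval n (map (\<lambda>(b,e). (b, \<lambda>j. e j + \<delta> j)) rs) (\<lambda>j. elem_sym n (Suc j) x)"
      unfolding pe kk using rs by simp
  qed
qed

lemma Msym_rep:
  assumes idem: "sr_idempotent TYPE('a::{comm_semiring_0,comm_monoid_mult})"
    and frob: "sr_frobenius TYPE('a)"
  shows "card {j. j < n \<and> 0 < d j} = m \<Longrightarrow> rep n (Msym n d :: (nat \<Rightarrow> 'a) \<Rightarrow> 'a)"
proof (induction m arbitrary: d rule: less_induct)
  case (less m d)
  define S where "S = {j. j < n \<and> 0 < d j}"
  have finS: "finite S" unfolding S_def by simp
  have finP: "finite {\<sigma>. \<sigma> permutes {..<n}}" by (simp add: finite_permutations)
  show ?case
  proof (cases "S = {}")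
    case True
    have "\<And>x. Msym n d (x::nat \<Rightarrow> 'a) = 1"
      unfolding Msym_def
    proof (rule sum_idem_const[OF idem finP])
      show "{\<sigma>. \<sigma> permutes {..<n}} \<noteq> {}" using permutes_id by blast
      fix x :: "nat \<Rightarrow> 'a"
      show "\<forall>\<sigma>\<in>{\<sigma>. \<sigma> permutes {..<n}}. mon n (d \<circ> \<sigma>) x = 1"
      proof
        fix \<sigma> assume "\<sigma> \<in> {\<sigma>. \<sigma> permutes {..<n}}"
        then have p: "\<sigma> permutes {..<n}" by simp
        have "\<And>j. j < n \<Longrightarrow> d (\<sigma> j) = 0"
          using True permutes_in_image[OF p] unfolding S_def by auto
        then show "mon n (d \<circ> \<sigma>) x = 1" unfolding mon_def by simp
      qed
    qed
    note h1 = this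
    show ?thesis by (rule rep_cong[OF rep_one]) (rule h1[symmetric])
  next
    case False
    define c where "c = Min (d ` S)"
    define d' where "d' = (\<lambda>j. if j \<in> S then d j - c else d j)"
    have cin: "c \<in> d ` S" unfolding c_def using finS False by simp
    then obtain j0 where j0: "j0 \<in> S" "d j0 = c" by auto
    have sub: "{j. j < n \<and> 0 < d' j} \<subseteq> S - {j0}"
      using j0 unfolding d'_def S_def by auto
    have lt: "card {j. j < n \<and> 0 < d' j} < m"
    proof -
      have "card {j. j < n \<and> 0 < d' j} \<le> card (S - {j0})" using card_mono[OF _ sub] finS by simp
      also have "\<dots> < card S" using card_Diff1_less[OF finS j0(1)] .
      finally show ?thesis using less.prems S_def by simp
    qed
    have r': "rep n (Msym n d' :: (nat \<Rightarrow> 'a) \<Rightarrow> 'a)" using less.IH[OF lt refl] .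
    have k1: "1 \<le> card S" using finS False by (simp add: Suc_le_eq card_gt_0_iff)
    have kn: "card S \<le> n" using card_mono[of "{..<n}" S] unfolding S_def by auto
    have "rep n (\<lambda>x. elem_sym n (card S) x ^ c * Msym n d' (x :: nat \<Rightarrow> 'a))"
      by (rule rep_esym_mult[OF r' k1 kn])
    then show ?thesis
      by (rule rep_cong) (rule Msym_step[OF idem frob S_def False c_def d'_def, symmetric])
  qed
qed

lemma sum_list_sum_swap:
  "(\<Sum>p\<leftarrow>ps. sum (g p) A) = (\<Sum>\<sigma>\<in>A. \<Sum>p\<leftarrow>ps. g p \<sigma>)"
  by (induction ps) (auto simp: sum.distrib)

lemma poly_eval_perm:
  assumes "\<sigma> permutes {..<n}" "symmetric_expr n ps"
  shows "(\<Sum>(a, d) \<leftarrow> ps. a * mon n (d \<circ> \<sigma>) y) = poly_eval n ps y"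
proof -
  define g where "g = (\<lambda>(a, d). a * mon n d y)"
  have ms: "mset (map (\<lambda>(a, d). (a, d \<circ> \<sigma>)) ps) = mset ps"
    using assms unfolding symmetric_expr_def by blast
  have "(\<Sum>(a, d) \<leftarrow> ps. a * mon n (d \<circ> \<sigma>) y) = sum_list (map g (map (\<lambda>(a, d). (a, d \<circ> \<sigma>)) ps))"
    unfolding g_def by (simp add: case_prod_unfold comp_def)
  also have "\<dots> = sum_mset (image_mset g (mset (map (\<lambda>(a, d). (a, d \<circ> \<sigma>)) ps)))"
    by (simp only: mset_map[symmetric] sum_mset_sum_list)
  also have "\<dots> = sum_mset (image_mset g (mset ps))" by (simp only: ms)
  also have "\<dots> = sum_list (map g ps)" by (simp only: mset_map[symmetric] sum_mset_sum_list)
  also have "\<dots> = poly_eval n ps y" unfolding g_def poly_eval_mon by simp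
  finally show ?thesis .
qed

lemma symm_Msym:
  assumes idem: "sr_idempotent TYPE('a::{comm_semiring_0,comm_monoid_mult})"
    and "symmetric_expr n ps"
  shows "poly_eval n ps (y::nat \<Rightarrow> 'a) = (\<Sum>(a, d) \<leftarrow> ps. a * Msym n d y)"
proof -
  define P where "P = {\<sigma>. \<sigma> permutes {..<n}}"
  have finP: "finite P" unfolding P_def by (simp add: finite_permutations)
  have Pne: "P \<noteq> {}" using permutes_id unfolding P_def by blast
  have "(\<Sum>(a, d) \<leftarrow> ps. a * Msym n d y) = (\<Sum>p \<leftarrow> ps. \<Sum>\<sigma>\<in>P. (case p of (a, d) \<Rightarrow> a * mon n (d \<circ> \<sigma>) y))"
    unfolding Msym_def P_def by (rule arg_cong[where f=sum_list], rule map_cong) (auto simp: sum_distrib_left)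
  also have "\<dots> = (\<Sum>\<sigma>\<in>P. \<Sum>(a, d) \<leftarrow> ps. a * mon n (d \<circ> \<sigma>) y)"
    by (rule sum_list_sum_swap)
  also have "\<dots> = poly_eval n ps y"
    by (rule sum_idem_const[OF idem finP Pne]) (use assms(2) poly_eval_perm in \<open>auto simp: P_def\<close>)
  finally show ?thesis by simp
qed

lemma rep_list:
  assumes idem: "sr_idempotent TYPE('a::{comm_semiring_0,comm_monoid_mult})"
    and frob: "sr_frobenius TYPE('a)"
  shows "rep n (\<lambda>y::nat \<Rightarrow> 'a. \<Sum>(a, d) \<leftarrow> ps. a * Msym n d y)"
proof (induction ps)
  case Nil then show ?case using rep_zero by simp
next
  case (Cons p ps)
  obtain a d where p: "p = (a, d)" by fastforce
  have "rep n (\<lambda>y::nat \<Rightarrow> 'a. a * Msym n d y)" using rep_cmult Msym_rep[OF idem frob refl] by blast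
  then show ?case using rep_add[OF _ Cons.IH] p by simp
qed

lemma two_to_one:
  assumes idem: "sr_idempotent TYPE('a::{comm_semiring_0,comm_monoid_mult})"
    and frob: "sr_frobenius TYPE('a)"
  shows "fully_elementary TYPE('a) \<and> sr_upper_bound TYPE('a) \<and> sr_two_cancellative TYPE('a)"
proof (intro conjI)
  show "fully_elementary TYPE('a)"
    unfolding fully_elementary_def n_elementary_def
  proof (intro allI impI)
    fix n and ps :: "'a poly_expr" assume s: "symmetric_expr n ps"
    have "rep n (\<lambda>y::nat \<Rightarrow> 'a. poly_eval n ps y)"
      by (rule rep_cong[OF rep_list[OF idem frob, of n ps]]) (rule symm_Msym[OF idem s, symmetric])
    then show "\<exists>rs. \<forall>x. poly_eval n ps x = poly_eval n rs (\<lambda>j. elem_sym n (Suc j) x)"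
      unfolding rep_def by simp
  qed
  show "sr_upper_bound TYPE('a)"
    unfolding sr_upper_bound_def intr_le_def
  proof (intro allI impI)
    fix a b :: 'a assume "(\<exists>x. a + x = b) \<and> (\<exists>x. b + x = a)"
    then obtain u v where u: "a + u = b" and v: "b + v = a" by blast
    have 1: "a + b = b"
    proof -
      have "a + b = (a + a) + u" using u by (simp add: add.assoc)
      then show ?thesis using u idemD[OF idem, of a] by simp
    qed
    have 2: "b + a = a"
    proof -
      have "b + a = (b + b) + v" using v by (simp add: add.assoc)
      then show ?thesis using v idemD[OF idem, of b] by simp
    qed
    have "a = b + a" using 2 by simp
    also have "\<dots> = a + b" by (rule add.commute)
    also have "\<dots> = b" by (rule 1)
    finally show "a = b" .
  qed
  show "sr_two_cancellative TYPE('a)"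
    unfolding sr_two_cancellative_def
  proof (intro allI impI)
    fix x y :: 'a assume "x + x = y + y"
    then show "x = y" using idemD[OF idem, of x] idemD[OF idem, of y] by simp
  qed
qed



lemma mon2: "mon 2 d v = v 0 ^ d 0 * v 1 ^ d 1"
  by (simp add: mon_def numeral_2_eq_2 lessThan_Suc mult_ac)

lemma intr_le_add: "intr_le a b \<Longrightarrow> intr_le c d \<Longrightarrow> intr_le (a + c) (b + d)"
  unfolding intr_le_def by (metis add.assoc add.commute)

lemma intr_le_0: "intr_le 0 b" unfolding intr_le_def by simp

lemma zero_var_le:
  "intr_le (poly_eval 2 rs (u(1:=0)) :: 'a::{comm_semiring_0,comm_monoid_mult}) (poly_eval 2 rs u)"
proof (induction rs)
  case Nil then show ?case by (simp add: poly_eval_Nil intr_le_def)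
next
  case (Cons p rs)
  obtain a d where p: "p = (a, d)" by fastforce
  have "intr_le (a * mon 2 d (u(1:=0))) (a * mon 2 d u)"
  proof (cases "d 1 = 0")
    case True then show ?thesis unfolding intr_le_def by (intro exI[of _ 0]) (simp add: mon2)
  next
    case False
    then have "(0::'a) ^ d 1 = 0" by (cases "d 1") auto
    then show ?thesis by (simp add: mon2 intr_le_0)
  qed
  then show ?case unfolding p poly_eval_Cons using intr_le_add Cons.IH by blast
qed

lemma binom_le:
  fixes x y :: "'a::{comm_semiring_0,comm_monoid_mult}"
  shows "N \<ge> 1 \<Longrightarrow> intr_le (x^N + y^N) ((x+y)^N)"
proof (induction N rule: nat_induct_at_least)
  case base then show ?case unfolding intr_le_def by (intro exI[of _ 0]) simp
next
  case (Suc N)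
  then obtain z where z: "x^N + y^N + z = (x+y)^N" unfolding intr_le_def by blast
  have "(x+y)^Suc N = (x+y) * (x^N + y^N + z)" using z by simp
  also have "\<dots> = x^Suc N + y^Suc N + (x*y^N + y*x^N + (x+y)*z)" by (simp add: algebra_simps)
  finally show ?case unfolding intr_le_def by metis
qed

lemma subsets01: "S \<subseteq> {..<2::nat} \<longleftrightarrow> S = {} \<or> S = {0} \<or> S = {1} \<or> S = {0,1}"
proof
  assume "S \<subseteq> {..<2::nat}"
  then have "S \<subseteq> {0,1}" by auto
  then show "S = {} \<or> S = {0} \<or> S = {1} \<or> S = {0,1}" by blast
qed auto

lemma esym21: "elem_sym 2 1 x = x 0 + x 1"
proof -
  have "{S. S \<subseteq> {..<2::nat} \<and> card S = 1} = {{0},{1}}"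
    unfolding subsets01 by auto
  then show ?thesis unfolding elem_sym_def by simp
qed

lemma esym22: "elem_sym 2 2 x = x 0 * x 1"
proof -
  have "{S. S \<subseteq> {..<2::nat} \<and> card S = 2} = {{0,1}}"
    unfolding subsets01 by auto
  then show ?thesis unfolding elem_sym_def by simp
qed

lemma esym21': "elem_sym 2 (Suc 0) x = x 0 + x 1"
  using esym21 by simp

lemma esym22': "elem_sym 2 (Suc (Suc 0)) x = x 0 * x 1"
proof -
  have e: "Suc (Suc 0) = (2::nat)" by simp
  show ?thesis unfolding e by (rule esym22)
qed

lemma poly_eval_cong: "(\<And>j. j < n \<Longrightarrow> u j = v j) \<Longrightarrow> poly_eval n rs u = poly_eval n rs v"
  unfolding poly_eval_def by (rule arg_cong[where f=sum_list], rule map_cong) (auto intro!: prod.cong)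

lemma one_to_two:
  assumes fe: "fully_elementary TYPE('a::{comm_semiring_0,comm_monoid_mult})"
    and ub: "sr_upper_bound TYPE('a)" and tc: "sr_two_cancellative TYPE('a)"
  shows "sr_frobenius TYPE('a) \<and> sr_idempotent TYPE('a)"
proof -
  have frob: "sr_frobenius TYPE('a)"
    unfolding sr_frobenius_def
  proof (intro allI impI)
    fix x y :: 'a and N :: nat assume N: "N \<ge> 1"
    define D where "D = (\<lambda>i::nat. \<lambda>j::nat. if j = i then N else 0)"
    define ps :: "'a poly_expr" where "ps = [(1, D 0), (1, D 1)]"
    have sym: "symmetric_expr 2 ps" unfolding symmetric_expr_def
    proof (intro allI impI)
      fix \<sigma> assume p: "\<sigma> permutes {..<2::nat}"
      have ip: "inv \<sigma> permutes {..<2}" using permutes_inv[OF p] .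
      have hh: "\<And>x i. (x = inv \<sigma> i) \<longleftrightarrow> (\<sigma> x = i)" by (metis permutes_inv_eq[OF p])
      have Dc: "\<And>i. D i \<circ> \<sigma> = D (inv \<sigma> i)"
        unfolding D_def comp_def by (simp add: fun_eq_iff hh)
      have "inv \<sigma> 0 < 2" "inv \<sigma> 1 < 2" using permutes_in_image[OF ip, of 0] permutes_in_image[OF ip, of 1] by auto
      moreover have "inv \<sigma> 0 \<noteq> inv \<sigma> 1" using permutes_inj[OF ip] by (metis inj_eq zero_neq_one)
      ultimately have "(inv \<sigma> 0 = 0 \<and> inv \<sigma> 1 = 1) \<or> (inv \<sigma> 0 = 1 \<and> inv \<sigma> 1 = 0)" by linarith
      then show "mset (map (\<lambda>(a, d). (a, d \<circ> \<sigma>)) ps) = mset ps"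
        unfolding ps_def using Dc by auto
    qed
    obtain rs where rs: "\<forall>x. poly_eval 2 ps x = poly_eval 2 rs (\<lambda>j. elem_sym 2 (Suc j) x)"
      using fe sym unfolding fully_elementary_def n_elementary_def by blast
    have pe: "\<And>v. poly_eval 2 ps v = v 0 ^ N + v 1 ^ N"
      unfolding ps_def by (simp add: poly_eval_Cons poly_eval_Nil mon2 D_def)
    define xv where "xv = (\<lambda>j::nat. if j = 0 then x else y)"
    define xw where "xw = (\<lambda>j::nat. if j = 0 then x + y else 0)"
    have "poly_eval 2 rs (\<lambda>j. elem_sym 2 (Suc j) xw) = poly_eval 2 rs ((\<lambda>j. elem_sym 2 (Suc j) xv)(1:=0))"
      by (rule poly_eval_cong) (auto simp: less_2_cases_iff esym21' esym22' xv_def xw_def)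
    moreover have "poly_eval 2 ps xw = (x + y)^N"
    proof -
      have "(0::'a) ^ N = 0" using N by (cases N) auto
      then show ?thesis using pe by (simp add: xw_def)
    qed
    moreover have "poly_eval 2 ps xv = x^N + y^N" using pe by (simp add: xv_def)
    ultimately have le1: "intr_le ((x+y)^N) (x^N + y^N)"
      using zero_var_le[of rs "\<lambda>j. elem_sym 2 (Suc j) xv"] rs by metis
    show "(x + y) ^ N = x ^ N + y ^ N"
      using ub le1 binom_le[OF N, of x y] unfolding sr_upper_bound_def by blast
  qed
  have "((1::'a) + 1)^2 = 1 + 1" using frob unfolding sr_frobenius_def by (metis one_le_numeral power_one)
  then have "((1::'a) + 1) + (1 + 1) = 1 + 1" by (simp add: power2_eq_square distrib_left)
  then have 11: "(1::'a) + 1 = 1" using tc unfolding sr_two_cancellative_def by blast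
  have "sr_idempotent TYPE('a)" unfolding sr_idempotent_def
  proof
    fix x :: 'a
    have "x + x = x * (1 + 1)" by (simp add: distrib_left)
    then show "x + x = x" using 11 by simp
  qed
  then show ?thesis using frob by blast
qed


theorem theorem4p6:
  fixes T :: "'a::{comm_semiring_0, comm_monoid_mult} itself"
  shows "(fully_elementary T \<and> sr_upper_bound T \<and> sr_two_cancellative T)
     \<longleftrightarrow> (sr_frobenius T \<and> sr_idempotent T)"
proof -
  have e1: "fully_elementary T = fully_elementary TYPE('a)"
    unfolding fully_elementary_def n_elementary_def by simp
  have e2: "sr_upper_bound T = sr_upper_bound TYPE('a)"
    unfolding sr_upper_bound_def by simp
  have e3: "sr_two_cancellative T = sr_two_cancellative TYPE('a)"
    unfolding sr_two_cancellative_def by simp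
  have e4: "sr_frobenius T = sr_frobenius TYPE('a)"
    unfolding sr_frobenius_def by simp
  have e5: "sr_idempotent T = sr_idempotent TYPE('a)"
    unfolding sr_idempotent_def by simp
  show ?thesis unfolding e1 e2 e3 e4 e5
    using one_to_two[where 'a='a] two_to_one[where 'a='a] by blast
qed

end
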